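(* With the setting in the context, the Hamiltonian $H=-\sum_n\sum_{x\in K_n}A_x^0-\sum_n\sum_{y\in K_n}B_y^0$ satisfies $HA_x^r=A_x^rH$ for all $n$, all $x\in K_n$ and all $r\in\widehat G_{n+1}$, and $HB_y^g=B_y^gH$ for all $m$, all $y\in K_m$ and all $g\in G_{m-1}$.
   Context: $(C_\bullet,\partial^C_\bullet)$ is a chain complex with each $C_n$ free abelian on a finite set $K_n$, $K_n\ne\emptyset$ for finitely many $n$; $(G_\bullet,\partial^G_\bullet)$ is a chain complex of finite abelian groups, $\widehat{G}_k=\mathrm{Hom}(G_k,U(1))$. $\mathrm{hom}(C,G)^p=\prod_n\mathrm{Hom}(C_n,G_{n-p})$ with $(\delta^pf)_n=f_{n-1}\partial^C_n-(-1)^p\partial^G_{n-p}f_n$. $\mathrm{hom}(C,G)_p=\mathrm{Hom}(\mathrm{hom}(C,G)^p,U(1))$ (written additively), $\chi_m(f)=m(f)$, $\delta_1m=m\circ\delta^0$. $\mathcal H=\bigotimes_n\bigotimes_{x\in K_n}\mathbb C[G_n]$ with orthonormal basis $|f\rangle$, $f\in\mathrm{hom}(C,G)^0$; $P_t|f\rangle=|f+t\rangle$, $Q_m|f\rangle=\chi_m(f)|f\rangle$; $A_t=P_{\delta^{-1}t}$ ($t\in\mathrm{hom}(C,G)^{-1}$), $B_m=Q_{\delta_1m}$ ($m\in\mathrm{hom}(C,G)_1$). For $x\in K_n$, $g\in G_{n-p}$, $gx^*\in\mathrm{hom}(C,G)^p$ has $n$-th component sending $x\mapsto g$ and other elements of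 $K_n$ to $0$, other components $0$; for $r\in\widehat G_{n-p}$, $rx_*(f)=r(f_n(x))$. For $x\in K_n$: $A_x^r=\frac1{|G_{n+1}|}\sum_{h\in G_{n+1}}r(h)A_{hx^*}$ ($r\in\widehat G_{n+1}$), $B_x^g=\frac1{|G_{n-1}|}\sum_{\rho\in\widehat G_{n-1}}\rho(g)B_{\rho x_*}$ ($g\in G_{n-1}$); superscript $0$ denotes the trivial character, resp. the zero element. *)

theory Defs
  imports Complex_Main
begin

definition zmul :: "int \<Rightarrow> 'g::ab_group_add \<Rightarrow> 'g" where
  "zmul k a = (if 0 \<le> k then (\<Sum>i<nat k. a) else - (\<Sum>i<nat (-k). a))"

text \<open>Chain complex C with C_n free abelian on the finite set K n; the boundary
  is given on basis elements: d^C_n(x) = sum over y in K(n-1) of dC n x y times y.\<close>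
definition free_chain_complex :: "(int \<Rightarrow> 'k set) \<Rightarrow> (int \<Rightarrow> 'k \<Rightarrow> 'k \<Rightarrow> int) \<Rightarrow> bool" where
  "free_chain_complex K dC \<longleftrightarrow>
     (\<forall>n. finite (K n)) \<and> finite {n. K n \<noteq> {}} \<and>
     (\<forall>n x z. x \<in> K n \<longrightarrow> z \<in> K (n - 2) \<longrightarrow>
        (\<Sum>y\<in>K (n - 1). dC n x y * dC (n - 1) y z) = 0)"

definition finite_chain_complex :: "(int \<Rightarrow> 'g::ab_group_add set) \<Rightarrow> (int \<Rightarrow> 'g \<Rightarrow> 'g) \<Rightarrow> bool" where
  "finite_chain_complex G dG \<longleftrightarrow>
     (\<forall>n. finite (G n) \<and> 0 \<in> G n \<and> (\<forall>a\<in>G n. \<forall>b\<in>G n. a + b \<in> G n \<and> - a \<in> G n)) \<and>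
     (\<forall>n. \<forall>a\<in>G n. dG n a \<in> G (n - 1)) \<and>
     (\<forall>n. \<forall>a\<in>G n. \<forall>b\<in>G n. dG n (a + b) = dG n a + dG n b) \<and>
     (\<forall>n. \<forall>a\<in>G n. dG (n - 1) (dG n a) = 0)"

text \<open>hom(C,G)^p: f n is the restriction to the basis K n of a homomorphism C_n \<rightarrow> G_{n-p}.\<close>
definition cochains :: "(int \<Rightarrow> 'k set) \<Rightarrow> (int \<Rightarrow> 'g::ab_group_add set) \<Rightarrow> int \<Rightarrow> (int \<Rightarrow> 'k \<Rightarrow> 'g) set" where
  "cochains K G p = {f. \<forall>n x. (x \<in> K n \<longrightarrow> f n x \<in> G (n - p)) \<and> (x \<notin> K n \<longrightarrow> f n x = 0)}"

text \<open>(delta^p f)_n = f_{n-1} d^C_n - (-1)^p d^G_{n-p} f_n\<close>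
definition cobound :: "(int \<Rightarrow> 'k set) \<Rightarrow> (int \<Rightarrow> 'k \<Rightarrow> 'k \<Rightarrow> int) \<Rightarrow> (int \<Rightarrow> 'g::ab_group_add \<Rightarrow> 'g)
     \<Rightarrow> int \<Rightarrow> (int \<Rightarrow> 'k \<Rightarrow> 'g) \<Rightarrow> (int \<Rightarrow> 'k \<Rightarrow> 'g)" where
  "cobound K dC dG p f = (\<lambda>n x. if x \<in> K n then
      (\<Sum>y\<in>K (n - 1). zmul (dC n x y) (f (n - 1) y))
      - (if even p then dG (n - p) (f n x) else - dG (n - p) (f n x))
    else 0)"

definition chars :: "(int \<Rightarrow> 'g::ab_group_add set) \<Rightarrow> int \<Rightarrow> ('g \<Rightarrow> complex) set" where
  "chars G k = {\<chi>. (\<forall>a\<in>G k. \<forall>b\<in>G k. \<chi> (a + b) = \<chi> a * \<chi> b) \<and>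
                    (\<forall>a\<in>G k. cmod (\<chi> a) = 1) \<and> (\<forall>a. a \<notin> G k \<longrightarrow> \<chi> a = 1)}"

text \<open>The Hilbert space: complex functions on the basis hom(C,G)^0.\<close>
definition hilb :: "(int \<Rightarrow> 'k set) \<Rightarrow> (int \<Rightarrow> 'g::ab_group_add set) \<Rightarrow> ((int \<Rightarrow> 'k \<Rightarrow> 'g) \<Rightarrow> complex) set" where
  "hilb K G = {\<psi>. \<forall>f. f \<notin> cochains K G 0 \<longrightarrow> \<psi> f = 0}"

text \<open>P_t |f> = |f+t>, i.e. (P_t psi)(f) = psi(f - t).\<close>
definition Pop :: "(int \<Rightarrow> 'k set) \<Rightarrow> (int \<Rightarrow> 'g::ab_group_add set) \<Rightarrow> (int \<Rightarrow> 'k \<Rightarrow> 'g)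
     \<Rightarrow> ((int \<Rightarrow> 'k \<Rightarrow> 'g) \<Rightarrow> complex) \<Rightarrow> ((int \<Rightarrow> 'k \<Rightarrow> 'g) \<Rightarrow> complex)" where
  "Pop K G t \<psi> = (\<lambda>f. if f \<in> cochains K G 0 then \<psi> (\<lambda>n x. f n x - t n x) else 0)"

definition Qop :: "(int \<Rightarrow> 'k set) \<Rightarrow> (int \<Rightarrow> 'g::ab_group_add set) \<Rightarrow> ((int \<Rightarrow> 'k \<Rightarrow> 'g) \<Rightarrow> complex)
     \<Rightarrow> ((int \<Rightarrow> 'k \<Rightarrow> 'g) \<Rightarrow> complex) \<Rightarrow> ((int \<Rightarrow> 'k \<Rightarrow> 'g) \<Rightarrow> complex)" where
  "Qop K G m \<psi> = (\<lambda>f. if f \<in> cochains K G 0 then m f * \<psi> f else 0)"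

definition Aop where
  "Aop K G dC dG t = Pop K G (cobound K dC dG (-1) t)"

definition Bop where
  "Bop K G dC dG m = Qop K G (\<lambda>f. m (cobound K dC dG 0 f))"

definition dstar :: "int \<Rightarrow> 'k \<Rightarrow> 'g::ab_group_add \<Rightarrow> (int \<Rightarrow> 'k \<Rightarrow> 'g)" where
  "dstar n x g = (\<lambda>m y. if m = n \<and> y = x then g else 0)"

definition lstar :: "int \<Rightarrow> 'k \<Rightarrow> ('g \<Rightarrow> complex) \<Rightarrow> ((int \<Rightarrow> 'k \<Rightarrow> 'g) \<Rightarrow> complex)" where
  "lstar n x r = (\<lambda>f. r (f n x))"

definition Avert where
  "Avert K G dC dG n x r = (\<lambda>\<psi> f.
     (\<Sum>h\<in>G (n + 1). r h * Aop K G dC dG (dstar n x h) \<psi> f) / of_nat (card (G (n + 1))))"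

definition Bvert where
  "Bvert K G dC dG n x g = (\<lambda>\<psi> f.
     (\<Sum>\<rho>\<in>chars G (n - 1). \<rho> g * Bop K G dC dG (lstar n x \<rho>) \<psi> f) / of_nat (card (G (n - 1))))"

definition Ham where
  "Ham K G dC dG = (\<lambda>\<psi> f.
      - (\<Sum>n\<in>{n. K n \<noteq> {}}. \<Sum>x\<in>K n. Avert K G dC dG n x (\<lambda>_. 1) \<psi> f)
      - (\<Sum>n\<in>{n. K n \<noteq> {}}. \<Sum>y\<in>K n. Bvert K G dC dG n y 0 \<psi> f))"

end

theory Submission
  imports Defs
begin

lemma zmul_0 [simp]: "zmul 0 a = 0" by (simp add: zmul_def)

lemma zmul_succ: "zmul (k+1) a = zmul k a + a"
proof (cases "k \<ge> 0")
  case True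
  hence "nat (k+1) = Suc (nat k)" by simp
  thus ?thesis using True by (simp add: zmul_def)
next
  case False
  show ?thesis
  proof (cases "k = -1")
    case True thus ?thesis by (simp add: zmul_def)
  next
    case F2: False
    with False have "nat (-k) = Suc (nat (-(k+1)))" by simp
    thus ?thesis using False F2 by (simp add: zmul_def)
  qed
qed

lemma zmul_pred: "zmul (k - 1) a = zmul k a - a"
  using zmul_succ[of "k - 1" a] by (simp add: algebra_simps)

lemma zmul_add: "zmul (k + l) a = zmul k a + zmul l a"
proof (induct l rule: int_induct[where k=0])
  case base show ?case by simp
next
  case (step1 i)
  have "zmul (k + (i+1)) a = zmul ((k+i)+1) a" by (simp only: add.assoc)
  also have "\<dots> = zmul (k+i) a + a" by (rule zmul_succ)
  also have "\<dots> = zmul k a + (zmul i a + a)" using step1 by (simp add: add.assoc)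
  also have "\<dots> = zmul k a + zmul (i+1) a" by (simp add: zmul_succ)
  finally show ?case .
next
  case (step2 i)
  have "zmul (k + (i-1)) a = zmul ((k+i)-1) a" by (simp add: algebra_simps)
  also have "\<dots> = zmul (k+i) a - a" by (rule zmul_pred)
  also have "\<dots> = zmul k a + (zmul i a - a)" using step2 by (simp add: algebra_simps)
  also have "\<dots> = zmul k a + zmul (i-1) a" by (simp add: zmul_pred)
  finally show ?case .
qed

lemma zmul_neg: "zmul (-l) a = - zmul l a"
  using zmul_add[of l "-l" a] by (metis add.right_inverse zmul_0 neg_eq_iff_add_eq_0)

lemma zmul_mult: "zmul (k * l) a = zmul k (zmul l a)"
proof (induct k rule: int_induct[where k=0])
  case base show ?case by simp
next
  case (step1 i)
  have "zmul ((i+1) * l) a = zmul (i*l + l) a" by (simp add: algebra_simps)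
  also have "\<dots> = zmul (i*l) a + zmul l a" by (rule zmul_add)
  also have "\<dots> = zmul (i+1) (zmul l a)" using step1 by (simp add: zmul_succ)
  finally show ?case .
next
  case (step2 i)
  have "zmul ((i-1) * l) a = zmul (i*l + - l) a" by (simp add: algebra_simps del: add_uminus_conv_diff)
  also have "\<dots> = zmul (i*l) a - zmul l a" by (simp only: zmul_add zmul_neg diff_conv_add_uminus)
  also have "\<dots> = zmul (i-1) (zmul l a)" using step2 by (simp add: zmul_pred)
  finally show ?case .
qed

lemma zmul_0_right [simp]: "zmul k 0 = 0"
  by (induct k rule: int_induct[where k=0]) (simp_all add: zmul_succ zmul_pred)

lemma zmul_add_right: "zmul k (a + b) = zmul k a + zmul k b"
  by (induct k rule: int_induct[where k=0]) (simp_all add: zmul_succ zmul_pred algebra_simps)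

lemma zmul_diff_right: "zmul k (a - b) = zmul k a - zmul k b"
  by (induct k rule: int_induct[where k=0]) (simp_all add: zmul_succ zmul_pred algebra_simps)

lemma zmul_sum_left: "zmul (\<Sum>i\<in>I. k i) a = (\<Sum>i\<in>I. zmul (k i) a)"
  by (induct I rule: infinite_finite_induct) (simp_all add: zmul_add)

lemma zmul_sum_right: "zmul k (\<Sum>i\<in>I. a i) = (\<Sum>i\<in>I. zmul k (a i))"
  by (induct I rule: infinite_finite_induct) (simp_all add: zmul_add_right)

definition sg :: "'g::ab_group_add set \<Rightarrow> bool" where
  "sg S \<longleftrightarrow> 0 \<in> S \<and> (\<forall>a\<in>S. \<forall>b\<in>S. a + b \<in> S \<and> - a \<in> S)"

lemma sg_add: "sg S \<Longrightarrow> a \<in> S \<Longrightarrow> b \<in> S \<Longrightarrow> a + b \<in> S" by (simp add: sg_def)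
lemma sg_neg: "sg S \<Longrightarrow> a \<in> S \<Longrightarrow> - a \<in> S" by (simp add: sg_def)
lemma sg_0: "sg S \<Longrightarrow> 0 \<in> S" by (simp add: sg_def)
lemma sg_diff: "sg S \<Longrightarrow> a \<in> S \<Longrightarrow> b \<in> S \<Longrightarrow> a - b \<in> S"
  using sg_add[of S a "-b"] sg_neg[of S b] by simp
lemma sg_sum: "sg S \<Longrightarrow> (\<And>i. i \<in> I \<Longrightarrow> a i \<in> S) \<Longrightarrow> (\<Sum>i\<in>I. a i) \<in> S"
  by (induct I rule: infinite_finite_induct) (simp_all add: sg_0 sg_add)
lemma sg_zmul: "sg S \<Longrightarrow> a \<in> S \<Longrightarrow> zmul k a \<in> S"
  by (induct k rule: int_induct[where k=0]) (simp_all add: zmul_succ zmul_pred sg_0 sg_add sg_diff)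

lemma hom_0:
  fixes h :: "'a::ab_group_add \<Rightarrow> 'b::ab_group_add"
  assumes S: "sg S" and h: "\<And>a b. a \<in> S \<Longrightarrow> b \<in> S \<Longrightarrow> h (a + b) = h a + h b"
  shows "h 0 = 0"
proof -
  have "h (0 + 0) = h 0 + h 0" by (rule h[OF sg_0[OF S] sg_0[OF S]])
  hence e: "h 0 = h 0 + h 0" by (simp only: add_0)
  have "h 0 - h 0 = (h 0 + h 0) - h 0" using e by (rule arg_cong)
  hence "0 = h 0" by (simp only: diff_self add_diff_cancel)
  thus ?thesis by (rule sym)
qed
lemma hom_diff:
  fixes h :: "'a::ab_group_add \<Rightarrow> 'b::ab_group_add"
  assumes S: "sg S" and h: "\<And>a b. a \<in> S \<Longrightarrow> b \<in> S \<Longrightarrow> h (a + b) = h a + h b"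
    and a: "a \<in> S" and b: "b \<in> S"
  shows "h (a - b) = h a - h b"
proof -
  have "h ((a - b) + b) = h (a - b) + h b" by (rule h[OF sg_diff[OF S a b] b])
  hence e: "h a = h (a - b) + h b" by (simp only: diff_add_cancel)
  have "h a - h b = (h (a - b) + h b) - h b" using e by (rule arg_cong)
  hence "h a - h b = h (a - b)" by (simp only: add_diff_cancel)
  thus ?thesis by (rule sym)
qed
lemma hom_sum:
  fixes h :: "'a::ab_group_add \<Rightarrow> 'b::ab_group_add"
  assumes S: "sg S" and h: "\<And>a b. a \<in> S \<Longrightarrow> b \<in> S \<Longrightarrow> h (a + b) = h a + h b"
  shows "(\<And>i. i \<in> I \<Longrightarrow> a i \<in> S) \<Longrightarrow> h (\<Sum>i\<in>I. a i) = (\<Sum>i\<in>I. h (a i))"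
proof (induct I rule: infinite_finite_induct)
  case (infinite A) thus ?case using hom_0[OF S h] by simp
next
  case empty thus ?case using hom_0[OF S h] by simp
next
  case (insert x F)
  have ax: "a x \<in> S" using insert.prems by simp
  have aF: "(\<Sum>i\<in>F. a i) \<in> S" using sg_sum[OF S, of F a] insert.prems by simp
  have IH: "h (\<Sum>i\<in>F. a i) = (\<Sum>i\<in>F. h (a i))" using insert.hyps insert.prems by simp
  have "h (\<Sum>i\<in>insert x F. a i) = h (a x + (\<Sum>i\<in>F. a i))" using insert.hyps by simp
  also have "\<dots> = h (a x) + h (\<Sum>i\<in>F. a i)" by (rule h[OF ax aF])
  also have "\<dots> = (\<Sum>i\<in>insert x F. h (a i))" using IH insert.hyps by simp
  finally show ?case .
qed

lemma hom_zmul: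
  fixes h :: "'a::ab_group_add \<Rightarrow> 'b::ab_group_add"
  assumes S: "sg S" and h: "\<And>a b. a \<in> S \<Longrightarrow> b \<in> S \<Longrightarrow> h (a + b) = h a + h b"
    and a: "a \<in> S"
  shows "h (zmul k a) = zmul k (h a)"
proof (induct k rule: int_induct[where k=0])
  case base thus ?case using hom_0[OF S h] by simp
next
  case (step1 i)
  have "h (zmul (i+1) a) = h (zmul i a + a)" by (simp add: zmul_succ)
  also have "\<dots> = h (zmul i a) + h a" by (rule h[OF sg_zmul[OF S a] a])
  also have "\<dots> = zmul (i+1) (h a)" using step1 by (simp add: zmul_succ)
  finally show ?case .
next
  case (step2 i)
  have "h (zmul (i-1) a) = h (zmul i a - a)" by (simp add: zmul_pred)
  also have "\<dots> = h (zmul i a) - h a" by (rule hom_diff[OF S h sg_zmul[OF S a] a])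
  also have "\<dots> = zmul (i-1) (h a)" using step2 by (simp add: zmul_pred)
  finally show ?case .
qed


lemma fcc_sg: "finite_chain_complex G dG \<Longrightarrow> sg (G n)"
  by (simp add: finite_chain_complex_def sg_def)
lemma fcc_mem: "finite_chain_complex G dG \<Longrightarrow> a \<in> G n \<Longrightarrow> dG n a \<in> G (n - 1)"
  by (simp add: finite_chain_complex_def)
lemma fcc_add: "finite_chain_complex G dG \<Longrightarrow> a \<in> G n \<Longrightarrow> b \<in> G n \<Longrightarrow> dG n (a + b) = dG n a + dG n b"
  by (simp add: finite_chain_complex_def)
lemma fcc_dd: "finite_chain_complex G dG \<Longrightarrow> a \<in> G n \<Longrightarrow> dG (n - 1) (dG n a) = 0"
  by (simp add: finite_chain_complex_def)

lemma cobound_mem: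
  assumes fcc: "finite_chain_complex G dG" and f: "f \<in> cochains K G p"
  shows "cobound K dC dG p f \<in> cochains K G (p + 1)"
  unfolding cochains_def
proof (intro CollectI allI conjI impI)
  fix n x assume x: "x \<in> K n"
  have e1: "n - (p + 1) = n - 1 - p" "n - p - 1 = n - 1 - p" by simp_all
  have fy: "\<And>y. y \<in> K (n - 1) \<Longrightarrow> f (n - 1) y \<in> G (n - 1 - p)" using f by (simp add: cochains_def)
  have fx: "f n x \<in> G (n - p)" using f x by (simp add: cochains_def)
  have d: "dG (n - p) (f n x) \<in> G (n - 1 - p)" using fcc_mem[OF fcc fx] e1 by simp
  have s: "(\<Sum>y\<in>K (n - 1). zmul (dC n x y) (f (n - 1) y)) \<in> G (n - 1 - p)"
    by (rule sg_sum[OF fcc_sg[OF fcc]]) (rule sg_zmul[OF fcc_sg[OF fcc] fy])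
  show "cobound K dC dG p f n x \<in> G (n - (p + 1))"
    unfolding cobound_def e1 using x s d sg_diff[OF fcc_sg[OF fcc]] sg_neg[OF fcc_sg[OF fcc]] by auto
next
  fix n x assume "x \<notin> K n" thus "cobound K dC dG p f n x = 0" by (simp add: cobound_def)
qed

lemma coch_diff:
  assumes fcc: "finite_chain_complex G dG" and "f \<in> cochains K G p" "s \<in> cochains K G p"
  shows "(\<lambda>n x. f n x - s n x) \<in> cochains K G p"
  using assms sg_diff[OF fcc_sg[OF fcc]] by (simp add: cochains_def)

lemma dstar_mem:
  assumes fcc: "finite_chain_complex G dG" and "x \<in> K n" "h \<in> G (n + 1)"
  shows "dstar n x h \<in> cochains K G (-1)"
  using assms sg_0[OF fcc_sg[OF fcc]] by (auto simp: cochains_def dstar_def)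

lemma cobound0_diff:
  assumes fcc: "finite_chain_complex G dG" and f: "f \<in> cochains K G 0" and s: "s \<in> cochains K G 0"
  shows "cobound K dC dG 0 (\<lambda>n x. f n x - s n x) = (\<lambda>n x. cobound K dC dG 0 f n x - cobound K dC dG 0 s n x)"
proof (intro ext)
  fix n x
  show "cobound K dC dG 0 (\<lambda>n x. f n x - s n x) n x = cobound K dC dG 0 f n x - cobound K dC dG 0 s n x"
  proof (cases "x \<in> K n")
    case True
    have "f n x \<in> G n" "s n x \<in> G n" using f s True by (simp_all add: cochains_def)
    hence "dG n (f n x - s n x) = dG n (f n x) - dG n (s n x)"
      using hom_diff[OF fcc_sg[OF fcc], where h="dG n"] fcc_add[OF fcc] by blast
    thus ?thesis using True by (simp add: cobound_def zmul_diff_right sum_subtractf)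
  qed (simp add: cobound_def)
qed

lemma dd_zero:
  assumes fcc: "finite_chain_complex G dG" and fc: "free_chain_complex K dC"
    and t: "t \<in> cochains K G (-1)"
  shows "cobound K dC dG 0 (cobound K dC dG (-1) t) = (\<lambda>n x. 0)"
proof (intro ext)
  fix n y
  let ?s = "cobound K dC dG (-1) t"
  show "cobound K dC dG 0 ?s n y = 0"
  proof (cases "y \<in> K n")
    case False thus ?thesis by (simp add: cobound_def)
  next
    case True
    have tm: "\<And>m z. z \<in> K m \<Longrightarrow> t m z \<in> G (m + 1)" using t by (simp add: cochains_def)
    define A where "A z = (\<Sum>w\<in>K (n - 2). zmul (dC (n - 1) z w) (t (n - 2) w))" for z
    define D where "D z = dG n (t (n - 1) z)" for z
    define B where "B = (\<Sum>w\<in>K (n - 1). zmul (dC n y w) (t (n - 1) w))"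
    define E where "E = dG (n + 1) (t n y)"
    have s1: "\<And>z. z \<in> K (n - 1) \<Longrightarrow> ?s (n - 1) z = A z + D z"
      by (simp add: cobound_def A_def D_def)
    have s2: "?s n y = B + E" using True by (simp add: cobound_def B_def E_def)
    have tn1: "\<And>z. z \<in> K (n - 1) \<Longrightarrow> t (n - 1) z \<in> G n" using tm by fastforce
    have Bm: "B \<in> G n" unfolding B_def
      by (rule sg_sum[OF fcc_sg[OF fcc]], rule sg_zmul[OF fcc_sg[OF fcc] tn1])
    have Em: "E \<in> G n" unfolding E_def using fcc_mem[OF fcc tm[OF True]] by simp
    have hom: "\<And>a b. a \<in> G n \<Longrightarrow> b \<in> G n \<Longrightarrow> dG n (a + b) = dG n a + dG n b" using fcc_add[OF fcc] by blast
    have dE: "dG n E = 0" unfolding E_def using fcc_dd[OF fcc tm[OF True]] by simp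
    have dB: "dG n B = (\<Sum>w\<in>K (n - 1). zmul (dC n y w) (D w))"
      unfolding B_def D_def
      using hom_sum[OF fcc_sg[OF fcc] hom, where I="K (n - 1)" and a="\<lambda>w. zmul (dC n y w) (t (n - 1) w)"]
        sg_zmul[OF fcc_sg[OF fcc] tn1] hom_zmul[OF fcc_sg[OF fcc] hom tn1]
      by simp
    have A0: "(\<Sum>z\<in>K (n - 1). zmul (dC n y z) (A z)) = 0"
    proof -
      have "(\<Sum>z\<in>K (n - 1). zmul (dC n y z) (A z))
          = (\<Sum>z\<in>K (n - 1). \<Sum>w\<in>K (n - 2). zmul (dC n y z * dC (n - 1) z w) (t (n - 2) w))"
        by (simp add: A_def zmul_sum_right zmul_mult)
      also have "\<dots> = (\<Sum>w\<in>K (n - 2). \<Sum>z\<in>K (n - 1). zmul (dC n y z * dC (n - 1) z w) (t (n - 2) w))"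
        by (rule sum.swap)
      also have "\<dots> = (\<Sum>w\<in>K (n - 2). zmul (\<Sum>z\<in>K (n - 1). dC n y z * dC (n - 1) z w) (t (n - 2) w))"
        by (simp add: zmul_sum_left)
      also have "\<dots> = 0"
        using fc True by (simp add: free_chain_complex_def)
      finally show ?thesis .
    qed
    have "cobound K dC dG 0 ?s n y = (\<Sum>z\<in>K (n - 1). zmul (dC n y z) (?s (n - 1) z)) - dG n (?s n y)"
      using True by (simp add: cobound_def)
    also have "\<dots> = (\<Sum>z\<in>K (n - 1). zmul (dC n y z) (A z) + zmul (dC n y z) (D z)) - dG n (B + E)"
      using s1 s2 by (simp add: zmul_add_right)
    also have "\<dots> = 0"
      using A0 dB dE hom[OF Bm Em] by (simp add: sum.distrib)
    finally show ?thesis .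
  qed
qed


definition pt :: "'a set \<Rightarrow> ('a \<Rightarrow> complex) \<Rightarrow> ('a \<Rightarrow> 'a) \<Rightarrow> ('a \<Rightarrow> complex) \<Rightarrow> ('a \<Rightarrow> complex)" where
  "pt C w \<sigma> \<phi> = (\<lambda>f. if f \<in> C then w f * \<phi> (\<sigma> f) else 0)"

definition comm :: "(('a \<Rightarrow> complex) \<Rightarrow> ('a \<Rightarrow> complex)) \<Rightarrow> (('a \<Rightarrow> complex) \<Rightarrow> ('a \<Rightarrow> complex)) \<Rightarrow> bool" where
  "comm X Y \<longleftrightarrow> (\<forall>\<phi>. X (Y \<phi>) = Y (X \<phi>))"

definition lin :: "(('a \<Rightarrow> complex) \<Rightarrow> ('a \<Rightarrow> complex)) \<Rightarrow> bool" where
  "lin X \<longleftrightarrow> (\<forall>\<phi> \<psi>. X (\<lambda>f. \<phi> f + \<psi> f) = (\<lambda>f. X \<phi> f + X \<psi> f)) \<and> (\<forall>c \<phi>. X (\<lambda>f. c * \<phi> f) = (\<lambda>f. c * X \<phi> f))"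

lemma lin_add: "lin X \<Longrightarrow> X (\<lambda>f. \<phi> f + \<psi> f) = (\<lambda>f. X \<phi> f + X \<psi> f)" by (simp add: lin_def)
lemma lin_mult: "lin X \<Longrightarrow> X (\<lambda>f. c * \<phi> f) = (\<lambda>f. c * X \<phi> f)" by (simp add: lin_def)
lemma lin_zero: "lin X \<Longrightarrow> X (\<lambda>f. 0) = (\<lambda>f. 0)"
  using lin_mult[of X 0 "\<lambda>f. 0"] by simp
lemma lin_neg': "lin X \<Longrightarrow> X (\<lambda>f. - \<phi> f) = (\<lambda>f. - X \<phi> f)"
  using lin_mult[of X "-1" \<phi>] by simp
lemma lin_diff': "lin X \<Longrightarrow> X (\<lambda>f. \<phi> f - \<psi> f) = (\<lambda>f. X \<phi> f - X \<psi> f)"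
  using lin_add[of X \<phi> "\<lambda>f. - \<psi> f"] lin_neg'[of X \<psi>] by simp
lemma lin_div': "lin X \<Longrightarrow> X (\<lambda>f. \<phi> f / c) = (\<lambda>f. X \<phi> f / c)"
  using lin_mult[of X "inverse c" \<phi>] by (simp add: divide_inverse mult.commute)
lemma lin_sum': "lin X \<Longrightarrow> X (\<lambda>f. \<Sum>i\<in>I. \<phi> i f) = (\<lambda>f. \<Sum>i\<in>I. X (\<phi> i) f)"
proof (induct I rule: infinite_finite_induct)
  case (infinite A) thus ?case using lin_zero by simp
next
  case empty thus ?case using lin_zero by simp
next
  case (insert x F) thus ?case using lin_add[of X "\<phi> x" "\<lambda>f. \<Sum>i\<in>F. \<phi> i f"] by simp
qed

lemma lin_pt: "lin (pt C w \<sigma>)" by (auto simp: lin_def pt_def fun_eq_iff algebra_simps)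
lemma lin_sum: "(\<And>i. i \<in> I \<Longrightarrow> lin (X i)) \<Longrightarrow> lin (\<lambda>\<phi> f. \<Sum>i\<in>I. X i \<phi> f)"
  by (simp add: lin_def fun_eq_iff sum.distrib sum_distrib_left cong: sum.cong)
lemma lin_cmul: "lin X \<Longrightarrow> lin (\<lambda>\<phi> f. c * X \<phi> f)"
  by (simp add: lin_def fun_eq_iff algebra_simps)
lemma lin_div: "lin X \<Longrightarrow> lin (\<lambda>\<phi> f. X \<phi> f / c)"
  by (simp add: lin_def fun_eq_iff add_divide_distrib)
lemma lin_neg: "lin X \<Longrightarrow> lin (\<lambda>\<phi> f. - X \<phi> f)"
  by (simp add: lin_def fun_eq_iff)
lemma lin_diff: "lin X \<Longrightarrow> lin Y \<Longrightarrow> lin (\<lambda>\<phi> f. X \<phi> f - Y \<phi> f)"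
  by (simp add: lin_def fun_eq_iff algebra_simps)

lemma comm_sym: "comm X Y \<Longrightarrow> comm Y X" by (simp add: comm_def)
lemma comm_sum:
  assumes L: "lin Y" and C: "\<And>i. i \<in> I \<Longrightarrow> comm Y (X i)"
  shows "comm Y (\<lambda>\<phi> f. \<Sum>i\<in>I. X i \<phi> f)"
  unfolding comm_def
proof
  fix \<phi>
  have "Y (\<lambda>f. \<Sum>i\<in>I. X i \<phi> f) = (\<lambda>f. \<Sum>i\<in>I. Y (X i \<phi>) f)" by (rule lin_sum'[OF L])
  also have "\<dots> = (\<lambda>f. \<Sum>i\<in>I. X i (Y \<phi>) f)"
    using C by (simp add: comm_def)
  finally show "Y (\<lambda>f. \<Sum>i\<in>I. X i \<phi> f) = (\<lambda>f. \<Sum>i\<in>I. X i (Y \<phi>) f)" .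
qed
lemma comm_cmul: "lin Y \<Longrightarrow> comm Y X \<Longrightarrow> comm Y (\<lambda>\<phi> f. c * X \<phi> f)"
  by (simp add: comm_def lin_mult)
lemma comm_div: "lin Y \<Longrightarrow> comm Y X \<Longrightarrow> comm Y (\<lambda>\<phi> f. X \<phi> f / c)"
  by (simp add: comm_def lin_div')
lemma comm_neg: "lin Y \<Longrightarrow> comm Y X \<Longrightarrow> comm Y (\<lambda>\<phi> f. - X \<phi> f)"
  by (simp add: comm_def lin_neg')
lemma comm_diff: "lin Y \<Longrightarrow> comm Y X \<Longrightarrow> comm Y Z \<Longrightarrow> comm Y (\<lambda>\<phi> f. X \<phi> f - Z \<phi> f)"
  by (simp add: comm_def lin_diff')

lemma comm_pt:
  assumes "\<And>f. f \<in> C \<Longrightarrow> \<sigma>1 f \<in> C \<and> \<sigma>2 f \<in> C \<and> \<sigma>1 (\<sigma>2 f) = \<sigma>2 (\<sigma>1 f) \<and> w1 f * w2 (\<sigma>1 f) = w2 f * w1 (\<sigma>2 f)"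
  shows "comm (pt C w1 \<sigma>1) (pt C w2 \<sigma>2)"
  using assms by (simp add: comm_def pt_def fun_eq_iff mult.assoc)

lemma Aop_pt: "Aop K G dC dG t = pt (cochains K G 0) (\<lambda>_. 1) (\<lambda>f n x. f n x - cobound K dC dG (-1) t n x)"
  by (simp add: Aop_def Pop_def pt_def fun_eq_iff)
lemma Bop_pt: "Bop K G dC dG m = pt (cochains K G 0) (\<lambda>f. m (cobound K dC dG 0 f)) id"
  by (simp add: Bop_def Qop_def pt_def fun_eq_iff)

lemma lin_Aop: "lin (Aop K G dC dG t)" by (simp add: Aop_pt lin_pt)
lemma lin_Bop: "lin (Bop K G dC dG t)" by (simp add: Bop_pt lin_pt)

lemma lin_Avert: "lin (Avert K G dC dG n x r)"
  unfolding Avert_def by (intro lin_div lin_sum lin_cmul lin_Aop)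
lemma lin_Bvert: "lin (Bvert K G dC dG n x r)"
  unfolding Bvert_def by (intro lin_div lin_sum lin_cmul lin_Bop)
lemma lin_Ham: "lin (Ham K G dC dG)"
  unfolding Ham_def by (intro lin_diff lin_neg lin_sum lin_Avert lin_Bvert)

lemma shift_mem:
  assumes fcc: "finite_chain_complex G dG" and "x \<in> K n" "h \<in> G (n + 1)"
  shows "cobound K dC dG (-1) (dstar n x h) \<in> cochains K G 0"
  using cobound_mem[OF fcc dstar_mem[where K=K, OF fcc assms(2,3)], of dC] by simp

context
  fixes K :: "int \<Rightarrow> 'k set" and dC :: "int \<Rightarrow> 'k \<Rightarrow> 'k \<Rightarrow> int"
    and G :: "int \<Rightarrow> 'g::ab_group_add set" and dG :: "int \<Rightarrow> 'g \<Rightarrow> 'g"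
  assumes fc: "free_chain_complex K dC" and fcc: "finite_chain_complex G dG"
begin

lemma comm_AA:
  assumes "x \<in> K n" "h \<in> G (n + 1)" "x' \<in> K n'" "h' \<in> G (n' + 1)"
  shows "comm (Aop K G dC dG (dstar n x h)) (Aop K G dC dG (dstar n' x' h'))"
  unfolding Aop_pt
proof (rule comm_pt, intro conjI)
  fix f assume f: "f \<in> cochains K G 0"
  have sm1: "cobound K dC dG (-1) (dstar n x h) \<in> cochains K G 0"
    by (rule shift_mem[where K=K and dC=dC, OF fcc assms(1,2)])
  have sm2: "cobound K dC dG (-1) (dstar n' x' h') \<in> cochains K G 0"
    by (rule shift_mem[where K=K and dC=dC, OF fcc assms(3,4)])
  show "(\<lambda>na xa. f na xa - cobound K dC dG (- 1) (dstar n x h) na xa) \<in> cochains K G 0"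
    by (rule coch_diff[OF fcc f sm1])
  show "(\<lambda>na xa. f na xa - cobound K dC dG (- 1) (dstar n' x' h') na xa) \<in> cochains K G 0"
    by (rule coch_diff[OF fcc f sm2])
qed (simp_all add: fun_eq_iff algebra_simps)

lemma comm_AB:
  assumes "x \<in> K n" "h \<in> G (n + 1)"
  shows "comm (Aop K G dC dG (dstar n x h)) (Bop K G dC dG (lstar m y \<rho>))"
  unfolding Aop_pt Bop_pt
proof (rule comm_pt, intro conjI)
  fix f assume f: "f \<in> cochains K G 0"
  have sm: "cobound K dC dG (-1) (dstar n x h) \<in> cochains K G 0" by (rule shift_mem[where K=K and dC=dC, OF fcc assms])
  show "(\<lambda>n' x'. f n' x' - cobound K dC dG (-1) (dstar n x h) n' x') \<in> cochains K G 0"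
    by (rule coch_diff[OF fcc f sm])
  have "cobound K dC dG 0 (\<lambda>n' x'. f n' x' - cobound K dC dG (-1) (dstar n x h) n' x') = cobound K dC dG 0 f"
    using cobound0_diff[OF fcc f sm] dd_zero[OF fcc fc dstar_mem[where K=K, OF fcc assms]] by simp
  thus "1 * lstar m y \<rho> (cobound K dC dG 0 (\<lambda>n' x'. f n' x' - cobound K dC dG (-1) (dstar n x h) n' x'))
      = lstar m y \<rho> (cobound K dC dG 0 f) * 1" by simp
qed simp_all

lemma comm_BB: "comm (Bop K G dC dG a) (Bop K G dC dG b)"
  unfolding Bop_pt by (rule comm_pt) simp

lemma comm_A_Avert:
  assumes "x \<in> K n" "h \<in> G (n + 1)" "x' \<in> K n'"
  shows "comm (Aop K G dC dG (dstar n x h)) (Avert K G dC dG n' x' r)"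
  unfolding Avert_def
  by (intro comm_div comm_sum comm_cmul lin_Aop comm_AA assms)
lemma comm_A_Bvert:
  assumes "x \<in> K n" "h \<in> G (n + 1)"
  shows "comm (Aop K G dC dG (dstar n x h)) (Bvert K G dC dG m y g)"
  unfolding Bvert_def
  by (intro comm_div comm_sum comm_cmul lin_Aop comm_AB assms)
lemma comm_A_Ham:
  assumes "x \<in> K n" "h \<in> G (n + 1)"
  shows "comm (Aop K G dC dG (dstar n x h)) (Ham K G dC dG)"
  unfolding Ham_def
  by (intro comm_diff comm_neg comm_sum lin_Aop comm_A_Avert comm_A_Bvert assms)

lemma comm_B_Avert:
  assumes "x' \<in> K n'"
  shows "comm (Bop K G dC dG (lstar m y \<rho>)) (Avert K G dC dG n' x' r)"
  unfolding Avert_def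
  by (intro comm_div comm_sum comm_cmul lin_Bop comm_sym[OF comm_AB] assms)
lemma comm_B_Bvert:
  shows "comm (Bop K G dC dG b) (Bvert K G dC dG m y g)"
  unfolding Bvert_def
  by (intro comm_div comm_sum comm_cmul lin_Bop comm_BB)
lemma comm_B_Ham:
  shows "comm (Bop K G dC dG (lstar m y \<rho>)) (Ham K G dC dG)"
  unfolding Ham_def
  by (intro comm_diff comm_neg comm_sum lin_Bop comm_B_Avert comm_B_Bvert)

lemma part1: "x \<in> K n \<Longrightarrow> comm (Ham K G dC dG) (Avert K G dC dG n x r)"
  unfolding Avert_def
  by (intro comm_div comm_sum comm_cmul lin_Ham comm_sym[OF comm_A_Ham])
lemma part2: "comm (Ham K G dC dG) (Bvert K G dC dG m y g)"
  unfolding Bvert_def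
  by (intro comm_div comm_sum comm_cmul lin_Ham comm_sym[OF comm_B_Ham])

end

theorem lemma6:
  fixes K :: "int \<Rightarrow> 'k set" and dC :: "int \<Rightarrow> 'k \<Rightarrow> 'k \<Rightarrow> int"
    and G :: "int \<Rightarrow> 'g::ab_group_add set" and dG :: "int \<Rightarrow> 'g \<Rightarrow> 'g"
  assumes "free_chain_complex K dC" and "finite_chain_complex G dG"
  shows "(\<forall>n x r. x \<in> K n \<longrightarrow> r \<in> chars G (n + 1) \<longrightarrow>
            (\<forall>\<psi>\<in>hilb K G. Ham K G dC dG (Avert K G dC dG n x r \<psi>)
                           = Avert K G dC dG n x r (Ham K G dC dG \<psi>)))
       \<and> (\<forall>m y g. y \<in> K m \<longrightarrow> g \<in> G (m - 1) \<longrightarrow>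
            (\<forall>\<psi>\<in>hilb K G. Ham K G dC dG (Bvert K G dC dG m y g \<psi>)
                           = Bvert K G dC dG m y g (Ham K G dC dG \<psi>)))"
  using part1[OF assms] part2[OF assms] by (simp add: comm_def)

end
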